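(* Let $r\ge0$. Let $\eta\in D(\mathbb{R}^3;\mathbb{R})$ be spherically symmetric with positive Fourier transform $\tilde\eta(\mathbf k)=(2\pi)^{-3/2}\int e^{-i\mathbf k\cdot\mathbf x}\eta(\mathbf x)d^3\mathbf x$, and let $\tau>0$ be so large that $\mathrm{supp}\,\eta$ lies in the open ball of radius $\tau$ (so that $f(t,\mathbf x)=\delta(t-\tau)\eta(\mathbf x)$ is supported in the future lightcone). Put $F(\mathbf k)=|\mathbf k|^{-1/2}e^{i|\mathbf k|\tau}\tilde\eta(\mathbf k)$ and $F_R(\mathbf k)=R^{3/2}F(R\mathbf k)$ for $R>0$. Then there is a sequence $R_n\to\infty$ such that $\lim_{n\to\infty}\|T_rF_{R_n}\|_2=\infty$; equivalently $\langle\Omega,W(T_rF_{R_n})\Omega\rangle=e^{-\|T_rF_{R_n}\|_2^2/4}\to0$ (the timelike asymptotic fluctuations of the field in the state $\omega_r$ diverge).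
   Context: Let $\varepsilon_i=2^{-(i-1)}$, $b_i=1/i$ ($i\ge1$), $\tau_i=\varepsilon_i^{\,r-1}$, $\mu(\mathbf k)=|\mathbf k|$, $u_s$ = multiplication by $e^{i\mu s}$ on $L^2(\mathbb{R}^3)$, $\zeta^\circ_i(|\mathbf k|)=(\log2)^{-1/2}\chi_{[\varepsilon_{i+1},\varepsilon_i]}(|\mathbf k|)|\mathbf k|^{-3/2}$, and $Q_i$ the orthogonal projection onto span$\{\zeta^\circ_i(|\mathbf k|)Y_{\ell m}(\mathbf k/|\mathbf k|):0\le\ell\le i,|m|\le\ell\}$, $Y_{\ell m}$ the real spherical harmonics. $T_r=1+\sum_i(b_i^{-1}-1)u_{-\tau_i}Q_i\,\mathrm{Re}\,u_{\tau_i}+i\sum_i(b_i-1)u_{-\tau_i}Q_i\,\mathrm{Im}\,u_{\tau_i}$, with Re, Im pointwise real/imaginary parts (the series converges on functions such as $F_R$). $\Omega$ is the Fock vacuum and $W(\zeta)=\exp(\tfrac{i}{\sqrt2}(a^*(\zeta)+a(\zeta)))$ the Weyl operators, with $\langle\Omega,W(\zeta)\Omega\rangle=e^{-\|\zeta\|_2^2/4}$; the state is $\omega_r(W(F))=\langle\Omega,W(T_rF)\Omega\rangle$. *)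

theory Defs
  imports "HOL-Analysis.Analysis"
begin

type_synonym R3 = "real^3"

definition l2_norm :: "(R3 \<Rightarrow> complex) \<Rightarrow> ennreal" where
  "l2_norm f = (let I = (\<integral>\<^sup>+ k. ennreal ((cmod (f k))\<^sup>2) \<partial>lborel)
                in if I = \<infinity> then \<infinity> else ennreal (sqrt (enn2real I)))"

definition l2_inner :: "(R3 \<Rightarrow> complex) \<Rightarrow> (R3 \<Rightarrow> complex) \<Rightarrow> complex" where
  "l2_inner f g = (\<integral> k. cnj (f k) * g k \<partial>lborel)"

definition orth_proj :: "(R3 \<Rightarrow> complex) set \<Rightarrow> (R3 \<Rightarrow> complex) \<Rightarrow> (R3 \<Rightarrow> complex)" where
  "orth_proj V f = (THE g. g \<in> V \<and> (\<forall>h\<in>V. l2_inner h (\<lambda>k. f k - g k) = 0))"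

coinductive smooth3 :: "(R3 \<Rightarrow> real) \<Rightarrow> bool" where
  "continuous_on UNIV f \<Longrightarrow>
   (\<forall>j. \<exists>g. (\<forall>x. ((\<lambda>t. f (x + t *\<^sub>R axis j 1)) has_real_derivative g x) (at 0)) \<and> smooth3 g)
   \<Longrightarrow> smooth3 f"

definition test_function :: "(R3 \<Rightarrow> real) \<Rightarrow> bool" where
  "test_function \<eta> \<longleftrightarrow> smooth3 \<eta> \<and> compact (closure {x. \<eta> x \<noteq> 0})"

definition fourier3 :: "(R3 \<Rightarrow> real) \<Rightarrow> R3 \<Rightarrow> complex" where
  "fourier3 \<eta> k = complex_of_real ((2 * pi) powr (-3/2)) *
      (\<integral> x. exp (- \<i> * complex_of_real (k \<bullet> x)) * complex_of_real (\<eta> x) \<partial>lborel)"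

definition eps :: "nat \<Rightarrow> real" where "eps i = 2 powr (- (real i - 1))"
definition bb :: "nat \<Rightarrow> real" where "bb i = 1 / real i"
definition tau :: "real \<Rightarrow> nat \<Rightarrow> real" where "tau r i = eps i powr (r - 1)"

definition u :: "real \<Rightarrow> (R3 \<Rightarrow> complex) \<Rightarrow> R3 \<Rightarrow> complex" where
  "u s f k = exp (\<i> * complex_of_real (norm k * s)) * f k"

definition zeta0 :: "nat \<Rightarrow> real \<Rightarrow> real" where
  "zeta0 i \<rho> = (ln 2) powr (-1/2) * indicator {eps (Suc i) .. eps i} \<rho> * \<rho> powr (-3/2)"

definition poly3 :: "(nat \<times> nat \<times> nat \<Rightarrow> complex) \<Rightarrow> nat \<Rightarrow> R3 \<Rightarrow> complex" where
  "poly3 c n x = (\<Sum>(a,b,d) \<in> {(a,b,d). a + b + d \<le> n}.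
       c (a,b,d) * complex_of_real (x$1 ^ a * x$2 ^ b * x$3 ^ d))"

text \<open>Laplacian of the polynomial vanishes, written on coefficients.\<close>
definition harmonic_coeffs :: "(nat \<times> nat \<times> nat \<Rightarrow> complex) \<Rightarrow> bool" where
  "harmonic_coeffs c \<longleftrightarrow> (\<forall>a b d.
     of_nat ((a+2)*(a+1)) * c (a+2,b,d) + of_nat ((b+2)*(b+1)) * c (a,b+2,d)
     + of_nat ((d+2)*(d+1)) * c (a,b,d+2) = 0)"

text \<open>span{Y_lm : 0 \<le> l \<le> n, |m| \<le> l} = restrictions to S^2 of harmonic polynomials
  of degree \<le> n (spherical harmonics of degree l = restrictions of harmonic homogeneous
  polynomials of degree l).\<close>
definition sph_harm_span :: "nat \<Rightarrow> (R3 \<Rightarrow> complex) set" where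
  "sph_harm_span n = {Y. \<exists>c. (\<forall>a b d. a + b + d > n \<longrightarrow> c (a,b,d) = 0) \<and> harmonic_coeffs c
                          \<and> (\<forall>x. norm x = 1 \<longrightarrow> Y x = poly3 c n x)}"

definition Vspace :: "nat \<Rightarrow> (R3 \<Rightarrow> complex) set" where
  "Vspace i = {(\<lambda>k. complex_of_real (zeta0 i (norm k)) * Y (sgn k)) | Y. Y \<in> sph_harm_span i}"

definition Q :: "nat \<Rightarrow> (R3 \<Rightarrow> complex) \<Rightarrow> R3 \<Rightarrow> complex" where
  "Q i = orth_proj (Vspace i)"

definition ReF :: "(R3 \<Rightarrow> complex) \<Rightarrow> R3 \<Rightarrow> complex" where
  "ReF f k = complex_of_real (Re (f k))"
definition ImF :: "(R3 \<Rightarrow> complex) \<Rightarrow> R3 \<Rightarrow> complex" where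
  "ImF f k = complex_of_real (Im (f k))"

text \<open>T_r F (series over i \<ge> 1, taken pointwise; at each k at most two terms are nonzero).\<close>
definition T :: "real \<Rightarrow> (R3 \<Rightarrow> complex) \<Rightarrow> R3 \<Rightarrow> complex" where
  "T r F k = F k
     + (\<Sum>n. let i = Suc n in complex_of_real (1 / bb i - 1) *
              u (- tau r i) (Q i (ReF (u (tau r i) F))) k)
     + \<i> * (\<Sum>n. let i = Suc n in complex_of_real (bb i - 1) *
              u (- tau r i) (Q i (ImF (u (tau r i) F))) k)"

end

theory Submission
  imports Defs "HOL-Library.Function_Algebras"
begin

lemma eps_pos: "eps i > 0" by (simp add: eps_def)
lemma eps_Suc: "eps (Suc i) = eps i / 2"
  unfolding eps_def by (simp add: powr_diff powr_minus divide_simps powr_add)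
lemma eps_le1: "i \<ge> 1 \<Longrightarrow> eps i \<le> 1"
proof -
  assume "i \<ge> 1"
  then have "eps i \<le> 2 powr 0" unfolding eps_def by (intro powr_mono) auto
  then show ?thesis by simp
qed
lemma eps_le2: "eps i \<le> 2"
proof -
  have "eps i \<le> 2 powr 1" unfolding eps_def by (intro powr_mono) auto
  then show ?thesis by simp
qed

lemma borel_measurable_cnj[measurable]:
  "f \<in> borel_measurable M \<Longrightarrow> (\<lambda>x. cnj (f x)) \<in> borel_measurable M"
  by (rule borel_measurable_continuous_on[where f=cnj]) (auto intro: continuous_intros)

interpretation fvs: vector_space "\<lambda>(c::complex) (f::R3 \<Rightarrow> complex). (\<lambda>x. c * f x)"
  by unfold_locales (auto simp: fun_eq_iff algebra_simps)

definition good :: "(R3 \<Rightarrow> complex) \<Rightarrow> bool" where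
  "good g \<longleftrightarrow> g \<in> borel_measurable borel \<and> (\<exists>B. \<forall>k. cmod (g k) \<le> B) \<and> (\<forall>k. norm k > 2 \<longrightarrow> g k = 0)"

lemma good_integrable:
  assumes "good g" "good h"
  shows "integrable lborel (\<lambda>k. cnj (g k) * h k)"
proof -
  from assms obtain B1 B2 where b1: "\<forall>k. cmod (g k) \<le> B1" and b2: "\<forall>k. cmod (h k) \<le> B2"
    unfolding good_def by blast
  have int: "integrable lborel (\<lambda>x. indicator (cball (0::R3) 2) x *\<^sub>R (B1 * B2))"
    by (rule borel_integrable_compact) auto
  show ?thesis
  proof (rule Bochner_Integration.integrable_bound[OF int])
    have [measurable]: "g \<in> borel_measurable borel" "h \<in> borel_measurable borel" using assms unfolding good_def by auto
    show "(\<lambda>k. cnj (g k) * h k) \<in> borel_measurable lborel" by simp measurable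
    show "AE x in lborel. norm (cnj (g x) * h x) \<le> norm (indicator (cball (0::R3) 2) x *\<^sub>R (B1 * B2))"
    proof (intro AE_I2)
      fix x :: R3
      show "norm (cnj (g x) * h x) \<le> norm (indicator (cball (0::R3) 2) x *\<^sub>R (B1 * B2))"
      proof (cases "norm x > 2")
        case True then show ?thesis using assms unfolding good_def by auto
      next
        case False
        have "norm (cnj (g x) * h x) = cmod (g x) * cmod (h x)" by (simp add: norm_mult)
        also have "\<dots> \<le> B1 * B2" using b1 b2 by (intro mult_mono) (auto intro: order.trans[OF norm_ge_zero])
        finally show ?thesis using False by (auto simp: indicator_def)
      qed
    qed
  qed
qed

lemma good_add: "good f \<Longrightarrow> good g \<Longrightarrow> good (f + g)"
  unfolding good_def
proof (elim conjE exE, intro conjI)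
  fix B1 B2 assume "\<forall>k. cmod (f k) \<le> B1" "\<forall>k. cmod (g k) \<le> B2"
  then show "\<exists>B. \<forall>k. cmod ((f + g) k) \<le> B"
    by (intro exI[of _ "B1+B2"]) (auto intro: order.trans[OF norm_triangle_ineq] add_mono)
next
  assume [measurable]: "f \<in> borel_measurable borel" "g \<in> borel_measurable borel"
  show "f + g \<in> borel_measurable borel" unfolding plus_fun_def by measurable
qed auto

lemma good_scale: "good f \<Longrightarrow> good (\<lambda>x. c * f x)"
  unfolding good_def
proof (elim conjE exE, intro conjI)
  fix B1 assume "\<forall>k. cmod (f k) \<le> B1"
  then show "\<exists>B. \<forall>k. cmod (c * f k) \<le> B"
    by (intro exI[of _ "cmod c * B1"]) (auto simp: norm_mult intro: mult_left_mono)
qed auto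

lemma good_zero: "good 0" unfolding good_def zero_fun_def by auto

lemma good_diff: "good f \<Longrightarrow> good g \<Longrightarrow> good (f - g)"
proof -
  assume "good f" "good g"
  then have "good (f + (\<lambda>x. (-1) * g x))" by (intro good_add good_scale)
  moreover have "f + (\<lambda>x. (-1) * g x) = f - g" by (auto simp: fun_eq_iff)
  ultimately show ?thesis by simp
qed

lemma subspace_good: "fvs.subspace (Collect good)"
  unfolding fvs.subspace_def using good_zero good_add good_scale by auto

lemma span_good: "S \<subseteq> Collect good \<Longrightarrow> fvs.span S \<subseteq> Collect good"
  using fvs.span_minimal[OF _ subspace_good] by blast

abbreviation ip where "ip \<equiv> l2_inner"

lemma ip_add2: "good h \<Longrightarrow> good x \<Longrightarrow> good y \<Longrightarrow> ip h (x + y) = ip h x + ip h y"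
  unfolding l2_inner_def
  by (simp add: distrib_left good_integrable)

lemma ip_diff2: "good h \<Longrightarrow> good x \<Longrightarrow> good y \<Longrightarrow> ip h (x - y) = ip h x - ip h y"
  unfolding l2_inner_def
  by (simp add: right_diff_distrib good_integrable)

lemma ip_scale2: "ip h (\<lambda>k. c * x k) = c * ip h x"
  unfolding l2_inner_def
  by (simp add: mult.left_commute)

lemma ip_add1: "good h \<Longrightarrow> good g \<Longrightarrow> good x \<Longrightarrow> ip (h + g) x = ip h x + ip g x"
  unfolding l2_inner_def
  by (simp add: distrib_right good_integrable)

lemma ip_scale1: "ip (\<lambda>k. c * h k) x = cnj c * ip h x"
  unfolding l2_inner_def
  by (simp add: mult.assoc)

lemma ip_zero1: "ip 0 x = 0" unfolding l2_inner_def by simp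

lemma good_sq_integrable: "good w \<Longrightarrow> integrable lborel (\<lambda>x. (cmod (w x))\<^sup>2)"
proof -
  assume "good w"
  then have "integrable lborel (\<lambda>x. norm (cnj (w x) * w x))"
    by (intro integrable_norm good_integrable)
  then show ?thesis by (simp add: norm_mult power2_eq_square)
qed

lemma ip_self: "ip w w = complex_of_real (\<integral>x. (cmod (w x))\<^sup>2 \<partial>lborel)"
proof -
  have "ip w w = (\<integral>x. complex_of_real ((cmod (w x))\<^sup>2) \<partial>lborel)"
    unfolding l2_inner_def by (intro Bochner_Integration.integral_cong refl) (metis complex_norm_square mult.commute of_real_power)
  then show ?thesis by (simp only: integral_complex_of_real)
qed

lemma ip_null_AE:
  assumes "good w" "ip w w = 0" shows "AE x in lborel. w x = 0"
proof -
  have "(\<integral>x. (cmod (w x))\<^sup>2 \<partial>lborel) = 0" using assms(2) by (simp add: ip_self)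
  then have "AE x in lborel. (cmod (w x))\<^sup>2 = 0"
    using integral_nonneg_eq_0_iff_AE[OF good_sq_integrable[OF assms(1)]] by auto
  then show ?thesis by auto
qed

lemma ip_null:
  assumes "good w" "ip w w = 0" shows "ip w y = 0"
proof -
  have "AE x in lborel. cnj (w x) * y x = 0" using ip_null_AE[OF assms] by auto
  then show ?thesis unfolding l2_inner_def by (rule integral_eq_zero_AE)
qed

lemma orth_span:
  assumes "S \<subseteq> Collect good" "good x" "\<forall>h\<in>S. ip h x = 0" "h \<in> fvs.span S"
  shows "ip h x = 0"
proof -
  have "good h \<and> ip h x = 0"
  proof (rule fvs.span_induct[OF assms(4)])
    show "fvs.subspace {h. good h \<and> ip h x = 0}"
    proof (rule fvs.subspaceI)
      show "0 \<in> {h. good h \<and> ip h x = 0}" using good_zero by (simp add: l2_inner_def)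
      show "a + b \<in> {h. good h \<and> ip h x = 0}" if "a \<in> {h. good h \<and> ip h x = 0}" "b \<in> {h. good h \<and> ip h x = 0}" for a b
        using that assms(2) by (simp add: good_add ip_add1)
      show "(\<lambda>k. c * a k) \<in> {h. good h \<and> ip h x = 0}" if "a \<in> {h. good h \<and> ip h x = 0}" for c a
        using that by (simp add: good_scale ip_scale1)
    qed
    show "\<And>h. h \<in> S \<Longrightarrow> good h \<and> ip h x = 0" using assms by auto
  qed
  then show ?thesis by simp
qed

lemma proj_exists:
  assumes "finite S" "S \<subseteq> Collect good"
  shows "good f \<Longrightarrow> \<exists>g\<in>fvs.span S. \<forall>h\<in>fvs.span S. ip h (f - g) = 0"
  using assms
proof (induction S arbitrary: f rule: finite_induct)
  case empty
  then show ?case by (auto simp: l2_inner_def)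
next
  case (insert v S)
  have gS: "S \<subseteq> Collect good" and gv: "good v" using insert by auto
  have spg: "fvs.span S \<subseteq> Collect good" by (rule span_good[OF gS])
  obtain gf where gf: "gf \<in> fvs.span S" "\<forall>h\<in>fvs.span S. ip h (f - gf) = 0"
    using insert gS by blast
  obtain gv' where gv': "gv' \<in> fvs.span S" "\<forall>h\<in>fvs.span S. ip h (v - gv') = 0"
    using insert(3)[OF gv gS] by blast
  define w where "w = v - gv'"
  have ggf: "good gf" and ggv': "good gv'" using gf gv' spg by auto
  have gw: "good w" unfolding w_def by (rule good_diff[OF gv ggv'])
  have gff: "good (f - gf)" by (rule good_diff[OF insert(4) ggf])
  have vw: "v = w + gv'" unfolding w_def by simp
  have wS: "\<forall>h\<in>fvs.span S. ip h w = 0" using gv' unfolding w_def by simp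
  have spins: "fvs.span S \<subseteq> fvs.span (insert v S)" by (rule fvs.span_mono) auto
  have vins: "v \<in> fvs.span (insert v S)" by (rule fvs.span_base) auto
  have wins: "w \<in> fvs.span (insert v S)" unfolding w_def
    using fvs.span_diff[OF vins] gv'(1) spins by auto
  have gins: "fvs.span (insert v S) \<subseteq> Collect good" using span_good insert by auto
  define \<alpha> where "\<alpha> = ip w (f - gf) / ip w w"
  define g where "g = (if ip w w = 0 then gf else gf + (\<lambda>k. \<alpha> * w k))"
  have gg: "good g" unfolding g_def using ggf gw by (auto intro: good_add good_scale)
  have gin: "g \<in> fvs.span (insert v S)"
    unfolding g_def using gf(1) spins wins fvs.span_add fvs.span_scale by auto
  have orthS: "\<forall>h\<in>S. ip h (f - g) = 0"
  proof
    fix h assume "h \<in> S"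
    then have hs: "h \<in> fvs.span S" by (rule fvs.span_base)
    then have gh: "good h" using spg by auto
    show "ip h (f - g) = 0"
    proof (cases "ip w w = 0")
      case True then show ?thesis using gf hs by (simp add: g_def)
    next
      case False
      have e: "f - g = (f - gf) - (\<lambda>k. \<alpha> * w k)" using False by (simp add: g_def fun_eq_iff)
      have "ip h (f - g) = ip h (f - gf) - \<alpha> * ip h w"
        unfolding e using gh gff gw by (subst ip_diff2) (auto intro: good_scale simp: ip_scale2)
      then show ?thesis using gf hs wS by simp
    qed
  qed
  have orthv: "ip v (f - g) = 0"
  proof -
    have gfg: "good (f - g)" using insert(4) gg by (rule good_diff)
    have "ip v (f - g) = ip w (f - g) + ip gv' (f - g)" using vw gw ggv' gfg by (simp add: ip_add1)
    moreover have "ip gv' (f - g) = 0"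
      by (rule orth_span[OF gS gfg orthS gv'(1)])
    moreover have "ip w (f - g) = 0"
    proof (cases "ip w w = 0")
      case True then show ?thesis using ip_null gw by blast
    next
      case False
      have e: "f - g = (f - gf) - (\<lambda>k. \<alpha> * w k)" using False by (simp add: g_def fun_eq_iff)
      have "ip w (f - g) = ip w (f - gf) - \<alpha> * ip w w"
        unfolding e using gw gff by (subst ip_diff2) (auto intro: good_scale simp: ip_scale2)
      then show ?thesis using False by (simp add: \<alpha>_def)
    qed
    ultimately show ?thesis by simp
  qed
  have "\<forall>h\<in>insert v S. ip h (f - g) = 0" using orthS orthv by auto
  moreover have "insert v S \<subseteq> Collect good" using insert by auto
  moreover have "good (f - g)" using insert(4) gg by (rule good_diff)
  ultimately have "\<forall>h\<in>fvs.span (insert v S). ip h (f - g) = 0"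
    using orth_span[of "insert v S" "f - g"] by blast
  then show ?case using gin by blast
qed



lemma sum_fun_apply: "(sum f A) x = (\<Sum>a\<in>A. f a x)"
  by (induction A rule: infinite_finite_induct) auto

definition Iset :: "nat \<Rightarrow> (nat \<times> nat \<times> nat) set" where
  "Iset n = {(a,b,d). a + b + d \<le> n}"

lemma finite_Iset: "finite (Iset n)"
proof -
  have "Iset n \<subseteq> {0..n} \<times> {0..n} \<times> {0..n}" unfolding Iset_def by auto
  then show ?thesis by (rule finite_subset) auto
qed

definition mono3 :: "nat \<times> nat \<times> nat \<Rightarrow> R3 \<Rightarrow> real" where
  "mono3 p x = (case p of (a,b,d) \<Rightarrow> x$1 ^ a * x$2 ^ b * x$3 ^ d)"

lemma poly3_alt: "poly3 c n x = (\<Sum>p\<in>Iset n. c p * complex_of_real (mono3 p x))"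
  unfolding poly3_def Iset_def mono3_def by (intro sum.cong) auto

definition vfun :: "nat \<Rightarrow> (nat \<times> nat \<times> nat \<Rightarrow> complex) \<Rightarrow> R3 \<Rightarrow> complex" where
  "vfun i c k = complex_of_real (zeta0 i (norm k)) * poly3 c i (sgn k)"

definition Cset :: "nat \<Rightarrow> (nat \<times> nat \<times> nat \<Rightarrow> complex) set" where
  "Cset i = {c. (\<forall>a b d. a + b + d > i \<longrightarrow> c (a,b,d) = 0) \<and> harmonic_coeffs c}"

lemma zeta0_out: "\<not> (eps (Suc i) \<le> \<rho> \<and> \<rho> \<le> eps i) \<Longrightarrow> zeta0 i \<rho> = 0"
  unfolding zeta0_def by (auto simp: indicator_def)

lemma zeta0_0: "zeta0 i 0 = 0"
  using eps_pos[of "Suc i"] by (intro zeta0_out) auto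

lemma Vspace_eq: "Vspace i = {vfun i c | c. c \<in> Cset i}"
proof safe
  fix g assume "g \<in> Vspace i"
  then obtain Y c where Y: "g = (\<lambda>k. complex_of_real (zeta0 i (norm k)) * Y (sgn k))"
    "\<forall>a b d. a + b + d > i \<longrightarrow> c (a,b,d) = 0" "harmonic_coeffs c"
    "\<forall>x. norm x = 1 \<longrightarrow> Y x = poly3 c i x"
    unfolding Vspace_def sph_harm_span_def by blast
  have "g = vfun i c"
  proof
    fix k show "g k = vfun i c k"
      using Y by (cases "k = 0") (auto simp: vfun_def zeta0_0 norm_sgn)
  qed
  then show "\<exists>c. g = vfun i c \<and> c \<in> Cset i" using Y by (auto simp: Cset_def)
next
  fix c assume "c \<in> Cset i"
  then show "vfun i c \<in> Vspace i"
    unfolding Vspace_def sph_harm_span_def Cset_def vfun_def by blast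
qed

lemma harmonic_add: "harmonic_coeffs c1 \<Longrightarrow> harmonic_coeffs c2 \<Longrightarrow> harmonic_coeffs (\<lambda>p. c1 p + c2 p)"
  unfolding harmonic_coeffs_def
proof (intro allI)
  fix a b d
  assume h1: "\<forall>a b d. of_nat ((a+2)*(a+1)) * c1 (a+2,b,d) + of_nat ((b+2)*(b+1)) * c1 (a,b+2,d)
     + of_nat ((d+2)*(d+1)) * c1 (a,b,d+2) = (0::complex)"
  assume h2: "\<forall>a b d. of_nat ((a+2)*(a+1)) * c2 (a+2,b,d) + of_nat ((b+2)*(b+1)) * c2 (a,b+2,d)
     + of_nat ((d+2)*(d+1)) * c2 (a,b,d+2) = (0::complex)"
  have "of_nat ((a+2)*(a+1)) * (c1 (a+2,b,d) + c2 (a+2,b,d)) + of_nat ((b+2)*(b+1)) * (c1 (a,b+2,d) + c2 (a,b+2,d))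
     + of_nat ((d+2)*(d+1)) * (c1 (a,b,d+2) + c2 (a,b,d+2)) =
     (of_nat ((a+2)*(a+1)) * c1 (a+2,b,d) + of_nat ((b+2)*(b+1)) * c1 (a,b+2,d)
     + of_nat ((d+2)*(d+1)) * c1 (a,b,d+2)) + (of_nat ((a+2)*(a+1)) * c2 (a+2,b,d) + of_nat ((b+2)*(b+1)) * c2 (a,b+2,d)
     + of_nat ((d+2)*(d+1)) * c2 (a,b,d+2))" by (simp add: algebra_simps)
  then show "of_nat ((a+2)*(a+1)) * (c1 (a+2,b,d) + c2 (a+2,b,d)) + of_nat ((b+2)*(b+1)) * (c1 (a,b+2,d) + c2 (a,b+2,d))
     + of_nat ((d+2)*(d+1)) * (c1 (a,b,d+2) + c2 (a,b,d+2)) = 0" using h1 h2 by simp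
qed

lemma harmonic_scale: "harmonic_coeffs c1 \<Longrightarrow> harmonic_coeffs (\<lambda>p. z * c1 p)"
  unfolding harmonic_coeffs_def
proof (intro allI)
  fix a b d
  assume h1: "\<forall>a b d. of_nat ((a+2)*(a+1)) * c1 (a+2,b,d) + of_nat ((b+2)*(b+1)) * c1 (a,b+2,d)
     + of_nat ((d+2)*(d+1)) * c1 (a,b,d+2) = (0::complex)"
  have "of_nat ((a+2)*(a+1)) * (z * c1 (a+2,b,d)) + of_nat ((b+2)*(b+1)) * (z * c1 (a,b+2,d))
     + of_nat ((d+2)*(d+1)) * (z * c1 (a,b,d+2)) =
     z * (of_nat ((a+2)*(a+1)) * c1 (a+2,b,d) + of_nat ((b+2)*(b+1)) * c1 (a,b+2,d)
     + of_nat ((d+2)*(d+1)) * c1 (a,b,d+2))" by (simp add: algebra_simps)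
  then show "of_nat ((a+2)*(a+1)) * (z * c1 (a+2,b,d)) + of_nat ((b+2)*(b+1)) * (z * c1 (a,b+2,d))
     + of_nat ((d+2)*(d+1)) * (z * c1 (a,b,d+2)) = 0" using h1 by simp
qed

lemma harmonic_zero: "harmonic_coeffs (\<lambda>p. 0)" unfolding harmonic_coeffs_def by simp

lemma vfun_add: "vfun i c1 + vfun i c2 = vfun i (\<lambda>p. c1 p + c2 p)"
  by (auto simp: fun_eq_iff vfun_def poly3_alt sum.distrib algebra_simps)

lemma vfun_scale: "(\<lambda>k. z * vfun i c1 k) = vfun i (\<lambda>p. z * c1 p)"
  by (auto simp: fun_eq_iff vfun_def poly3_alt sum_distrib_left algebra_simps)

lemma vfun_zero: "vfun i (\<lambda>p. 0) = 0"
  by (auto simp: fun_eq_iff vfun_def poly3_alt)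

lemma subspace_V: "fvs.subspace (Vspace i)"
  unfolding Vspace_eq
proof (rule fvs.subspaceI)
  show "0 \<in> {vfun i c |c. c \<in> Cset i}"
    using vfun_zero harmonic_zero by (force simp: Cset_def)
  show "x + y \<in> {vfun i c |c. c \<in> Cset i}" if "x \<in> {vfun i c |c. c \<in> Cset i}" "y \<in> {vfun i c |c. c \<in> Cset i}" for x y
  proof -
    from that(1) obtain c1 where "x = vfun i c1" "c1 \<in> Cset i" by blast
    moreover from that(2) obtain c2 where "y = vfun i c2" "c2 \<in> Cset i" by blast
    moreover have "(\<lambda>p. c1 p + c2 p) \<in> Cset i" using calculation(2,4) harmonic_add unfolding Cset_def by auto
    ultimately show ?thesis using vfun_add by blast
  qed
  show "(\<lambda>k. z * x k) \<in> {vfun i c |c. c \<in> Cset i}" if "x \<in> {vfun i c |c. c \<in> Cset i}" for z x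
  proof -
    from that obtain c1 where "x = vfun i c1" "c1 \<in> Cset i" by blast
    moreover have "(\<lambda>p. z * c1 p) \<in> Cset i" using calculation(2) harmonic_scale unfolding Cset_def by auto
    ultimately show ?thesis using vfun_scale by blast
  qed
qed

definition Mset :: "nat \<Rightarrow> (R3 \<Rightarrow> complex) set" where
  "Mset i = (\<lambda>p. vfun i (\<lambda>q. if q = p then 1 else 0)) ` Iset i"

lemma vfun_delta: "p \<in> Iset i \<Longrightarrow> vfun i (\<lambda>q. if q = p then 1 else 0) k = complex_of_real (zeta0 i (norm k)) * complex_of_real (mono3 p (sgn k))"
  unfolding vfun_def poly3_alt using finite_Iset[of i]
  by (simp add: if_distrib[of "\<lambda>x. x * _"] sum.delta' cong: if_cong)

lemma V_sub_span: "Vspace i \<subseteq> fvs.span (Mset i)"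
proof
  fix g assume "g \<in> Vspace i"
  then obtain c where g: "g = vfun i c" "c \<in> Cset i" unfolding Vspace_eq by auto
  have "g = (\<Sum>p\<in>Iset i. (\<lambda>k. c p * vfun i (\<lambda>q. if q = p then 1 else 0) k))"
  proof
    fix k
    have "(\<Sum>p\<in>Iset i. (\<lambda>k. c p * vfun i (\<lambda>q. if q = p then 1 else 0) k)) k
      = (\<Sum>p\<in>Iset i. c p * (complex_of_real (zeta0 i (norm k)) * complex_of_real (mono3 p (sgn k))))"
      unfolding sum_fun_apply by (intro sum.cong refl) (simp add: vfun_delta)
    also have "\<dots> = vfun i c k"
      unfolding vfun_def poly3_alt sum_distrib_left by (intro sum.cong refl) (simp add: algebra_simps)
    finally show "g k = (\<Sum>p\<in>Iset i. (\<lambda>k. c p * vfun i (\<lambda>q. if q = p then 1 else 0) k)) k"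
      using g by simp
  qed
  also have "\<dots> \<in> fvs.span (Mset i)"
    by (intro fvs.span_sum fvs.span_scale fvs.span_base) (auto simp: Mset_def)
  finally show "g \<in> fvs.span (Mset i)" .
qed

lemma V_basis: "\<exists>B. finite B \<and> B \<subseteq> Vspace i \<and> fvs.span B = Vspace i"
proof -
  obtain B where B: "B \<subseteq> Vspace i" "fvs.independent B" "Vspace i \<subseteq> fvs.span B"
    using fvs.basis_exists by metis
  have "finite (Mset i)" unfolding Mset_def using finite_Iset by simp
  then have "finite B" using fvs.independent_span_bound[OF _ B(2)] B(1) V_sub_span by blast
  moreover have "fvs.span B = Vspace i"
    using B fvs.span_minimal[OF B(1) subspace_V] by auto
  ultimately show ?thesis using B by blast
qed



lemma zeta0_nonneg: "zeta0 i \<rho> \<ge> 0"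
  unfolding zeta0_def by (auto simp: indicator_def)

lemma zeta0_in: "eps (Suc i) \<le> \<rho> \<Longrightarrow> \<rho> \<le> eps i \<Longrightarrow> zeta0 i \<rho> = (ln 2) powr (-1/2) * \<rho> powr (-3/2)"
  unfolding zeta0_def by (auto simp: indicator_def)

lemma zeta0_bound: "zeta0 i \<rho> \<le> (ln 2) powr (-1/2) * eps (Suc i) powr (-3/2)"
proof (cases "eps (Suc i) \<le> \<rho> \<and> \<rho> \<le> eps i")
  case True
  then have "\<rho> powr (-3/2) \<le> eps (Suc i) powr (-3/2)"
    using eps_pos[of "Suc i"] by (intro powr_mono2') auto
  then show ?thesis using True by (simp add: zeta0_in)
next
  case False then show ?thesis by (simp add: zeta0_out)
qed

lemma mono3_bound: "norm x \<le> 1 \<Longrightarrow> \<bar>mono3 p x\<bar> \<le> 1"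
proof -
  assume x: "norm x \<le> 1"
  have c: "\<bar>x$j\<bar> \<le> 1" for j using component_le_norm_cart[of x j] x by linarith
  obtain a b d where p: "p = (a,b,d)" by (cases p) auto
  have "\<bar>x$1 ^ a * x$2 ^ b * x$3 ^ d\<bar> = \<bar>x$1\<bar> ^ a * \<bar>x$2\<bar> ^ b * \<bar>x$3\<bar> ^ d"
    by (simp add: abs_mult power_abs)
  also have "\<dots> \<le> 1 * 1 * 1"
    using c by (intro mult_mono power_le_one) auto
  finally show ?thesis by (simp add: p mono3_def)
qed

lemma poly3_bound: "norm x \<le> 1 \<Longrightarrow> cmod (poly3 c n x) \<le> (\<Sum>p\<in>Iset n. cmod (c p))"
proof -
  assume x: "norm x \<le> 1"
  have "cmod (poly3 c n x) \<le> (\<Sum>p\<in>Iset n. cmod (c p * complex_of_real (mono3 p x)))"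
    unfolding poly3_alt by (rule norm_sum)
  also have "\<dots> \<le> (\<Sum>p\<in>Iset n. cmod (c p))"
  proof (intro sum_mono)
    fix p
    have "cmod (c p * complex_of_real (mono3 p x)) = cmod (c p) * \<bar>mono3 p x\<bar>" by (simp add: norm_mult)
    also have "\<dots> \<le> cmod (c p) * 1" using mono3_bound[OF x] by (intro mult_left_mono) auto
    finally show "cmod (c p * complex_of_real (mono3 p x)) \<le> cmod (c p)" by simp
  qed
  finally show ?thesis .
qed

lemma cont_mono3: "continuous_on UNIV (mono3 p)"
  by (cases p) (auto simp: mono3_def intro!: continuous_intros)

lemma cont_poly3: "continuous_on UNIV (poly3 c n)"
proof -
  have "continuous_on UNIV (\<lambda>x. \<Sum>p\<in>Iset n. c p * complex_of_real (mono3 p x))"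
    by (intro continuous_intros continuous_on_compose2[OF cont_mono3]) auto
  then show ?thesis unfolding poly3_alt[abs_def] .
qed

lemma meas_poly3_sgn[measurable]: "(\<lambda>k. poly3 c n (sgn k)) \<in> borel_measurable borel"
  using measurable_comp[OF borel_measurable_sgn borel_measurable_continuous_onI[OF cont_poly3]]
  by (simp add: comp_def)

lemma meas_zeta0[measurable]: "(\<lambda>k::R3. zeta0 i (norm k)) \<in> borel_measurable borel"
  unfolding zeta0_def by measurable

lemma vfun_good: "good (vfun i c)"
  unfolding good_def
proof (intro conjI)
  show "vfun i c \<in> borel_measurable borel" unfolding vfun_def[abs_def] by measurable
  show "\<exists>B. \<forall>k. cmod (vfun i c k) \<le> B"
  proof (intro exI allI)
    fix k
    have "cmod (vfun i c k) = zeta0 i (norm k) * cmod (poly3 c i (sgn k))"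
      by (simp add: vfun_def norm_mult zeta0_nonneg)
    also have "\<dots> \<le> ((ln 2) powr (-1/2) * eps (Suc i) powr (-3/2)) * (\<Sum>p\<in>Iset i. cmod (c p))"
      by (intro mult_mono zeta0_bound poly3_bound) (auto simp: norm_sgn sum_nonneg)
    finally show "cmod (vfun i c k) \<le> ((ln 2) powr (-1/2) * eps (Suc i) powr (-3/2)) * (\<Sum>p\<in>Iset i. cmod (c p))" .
  qed
  show "\<forall>k. 2 < norm k \<longrightarrow> vfun i c k = 0"
    using eps_le2[of i] by (auto simp: vfun_def zeta0_out)
qed

lemma V_good: "g \<in> Vspace i \<Longrightarrow> good g"
  unfolding Vspace_eq using vfun_good by auto

lemma V_vanish: "g \<in> Vspace i \<Longrightarrow> \<not> (eps (Suc i) \<le> norm k \<and> norm k \<le> eps i) \<Longrightarrow> g k = 0"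
  unfolding Vspace_eq by (auto simp: vfun_def zeta0_out)

lemma cont_AE_zero:
  fixes f :: "R3 \<Rightarrow> complex"
  assumes U: "open U" and f: "continuous_on U f" and ae: "AE x in lborel. x \<in> U \<longrightarrow> f x = 0"
    and x0: "x0 \<in> U"
  shows "f x0 = 0"
proof (rule ccontr)
  assume nz: "f x0 \<noteq> 0"
  have "open (U \<inter> f -` (- {0}))" by (rule continuous_open_preimage[OF f U]) auto
  moreover have "x0 \<in> U \<inter> f -` (- {0})" using x0 nz by auto
  ultimately obtain \<delta> where \<delta>: "\<delta> > 0" "ball x0 \<delta> \<subseteq> U \<inter> f -` (- {0})"
    using open_contains_ball by blast
  from ae obtain N where N: "{x \<in> space lborel. \<not> (x \<in> U \<longrightarrow> f x = 0)} \<subseteq> N" "emeasure lborel N = 0" "N \<in> sets lborel"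
    by (rule AE_E)
  have "ball x0 \<delta> \<subseteq> N" using \<delta>(2) N(1) by auto
  then have "emeasure lborel (ball x0 \<delta>) \<le> emeasure lborel N" by (rule emeasure_mono) (rule N(3))
  also have "\<dots> = 0" by (rule N(2))
  finally have "emeasure lborel (ball x0 \<delta>) = 0" by simp
  moreover have "emeasure lborel (ball x0 \<delta>) = ennreal (unit_ball_vol (real DIM(R3)) * \<delta> ^ DIM(R3))"
    using \<delta>(1) by (intro emeasure_ball) auto
  moreover have "unit_ball_vol (real DIM(R3)) * \<delta> ^ DIM(R3) > 0" using \<delta>(1) by simp
  ultimately show False using \<delta>(1) by (simp add: unit_ball_vol_3)
qed

lemma V_zero:
  assumes d: "d \<in> Vspace i" and dd: "ip d d = 0"
  shows "d = 0"
proof -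
  obtain c where dc: "d = vfun i c" using d unfolding Vspace_eq by auto
  have ae: "AE x in lborel. d x = 0" by (rule ip_null_AE[OF V_good[OF d] dd])
  define U where "U = {k::R3. eps (Suc i) < norm k} \<inter> {k. norm k < eps i}"
  have U: "open U" unfolding U_def
    by (intro open_Int open_Collect_less continuous_intros)
  have zpos: "zeta0 i (norm k) > 0" if "k \<in> U" for k
  proof -
    have "norm k > 0" using that eps_pos[of "Suc i"] by (auto simp: U_def)
    moreover have "ln (2::real) > 0" by simp
    ultimately show ?thesis using that by (auto simp: U_def zeta0_in)
  qed
  have ae2: "AE x in lborel. x \<in> U \<longrightarrow> poly3 c i (sgn x) = 0"
    using ae
  proof (rule AE_mp, intro AE_I2 impI)
    fix x assume "d x = 0" "x \<in> U"
    then show "poly3 c i (sgn x) = 0" using zpos[of x] by (simp add: dc vfun_def)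
  qed
  have cont: "continuous_on U (\<lambda>x. poly3 c i (sgn x))"
  proof (rule continuous_on_compose2[OF cont_poly3])
    have "\<forall>x\<in>U. x \<noteq> 0" using eps_pos[of "Suc i"] by (auto simp: U_def)
    then show "continuous_on U sgn"
      using continuous_on_sgn[OF continuous_on_id, of U] by simp
  qed auto
  have pz: "poly3 c i (sgn x) = 0" if "x \<in> U" for x
    by (rule cont_AE_zero[OF U cont ae2 that])
  show ?thesis
  proof
    fix k
    show "d k = 0 k"
    proof (cases "eps (Suc i) \<le> norm k \<and> norm k \<le> eps i")
      case False then show ?thesis by (simp add: dc vfun_def zeta0_out)
    next
      case True
      then have kn: "norm k > 0" using eps_pos[of "Suc i"] by linarith
      define k' where "k' = ((3/4 * eps i) / norm k) *\<^sub>R k"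
      have nk': "norm k' = 3/4 * eps i" using kn eps_pos[of i] by (simp add: k'_def)
      have "k' \<in> U" using nk' eps_pos[of i] by (simp add: U_def eps_Suc)
      moreover have "sgn k' = sgn k" using kn eps_pos[of i] by (simp add: k'_def sgn_scaleR)
      ultimately have "poly3 c i (sgn k) = 0" using pz by metis
      then show ?thesis by (simp add: dc vfun_def)
    qed
  qed
qed

definition Sh :: "nat \<Rightarrow> R3 set" where
  "Sh i = {k. eps (Suc i) \<le> norm k \<and> norm k \<le> eps i}"

lemma Sh_closed: "closed (Sh i)"
  unfolding Sh_def by (intro closed_Collect_conj closed_Collect_le continuous_intros)

lemma Q_props:
  assumes fm: "f \<in> borel_measurable borel"
    and fb: "\<forall>k. eps (Suc i) \<le> norm k \<and> norm k \<le> eps i \<longrightarrow> cmod (f k) \<le> B"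
  shows "Q i f \<in> Vspace i \<and> (\<forall>h\<in>Vspace i. l2_inner h (\<lambda>k. f k - Q i f k) = 0)"
proof -
  define f' where "f' = (\<lambda>k. complex_of_real (indicator (Sh i) k) * f k)"
  have [measurable]: "Sh i \<in> sets borel" using Sh_closed by (rule borel_closed)
  have gf': "good f'"
    unfolding good_def
  proof (intro conjI)
    show "f' \<in> borel_measurable borel" unfolding f'_def using fm by measurable
    show "\<exists>B. \<forall>k. cmod (f' k) \<le> B"
      using fb by (intro exI[of _ "max B 0"]) (auto simp: f'_def indicator_def Sh_def norm_mult)
    show "\<forall>k. 2 < norm k \<longrightarrow> f' k = 0"
      using eps_le2[of i] by (auto simp: f'_def indicator_def Sh_def)
  qed
  have same: "l2_inner h (\<lambda>k. f k - g k) = ip h (f' - g)" if "h \<in> Vspace i" for h g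
    unfolding l2_inner_def
  proof (intro Bochner_Integration.integral_cong refl)
    fix k
    show "cnj (h k) * (f k - g k) = cnj (h k) * (f' - g) k"
      using V_vanish[OF that, of k] by (cases "k \<in> Sh i") (auto simp: f'_def Sh_def)
  qed
  define P where "P = (\<lambda>g. g \<in> Vspace i \<and> (\<forall>h\<in>Vspace i. l2_inner h (\<lambda>k. f k - g k) = 0))"
  obtain Bs where Bs: "finite Bs" "Bs \<subseteq> Vspace i" "fvs.span Bs = Vspace i" using V_basis by blast
  have "Bs \<subseteq> Collect good" using Bs(2) V_good by auto
  from proj_exists[OF Bs(1) this gf'] obtain g where g: "g \<in> Vspace i" "\<forall>h\<in>Vspace i. ip h (f' - g) = 0"
    using Bs(3) by auto
  have Pg: "P g" using g same by (simp add: P_def)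
  have uniq: "g2 = g" if "P g2" for g2
  proof -
    have g2: "g2 \<in> Vspace i" "\<forall>h\<in>Vspace i. ip h (f' - g2) = 0" using that same by (auto simp: P_def)
    define d where "d = g2 - g"
    have dV: "d \<in> Vspace i" unfolding d_def using fvs.subspace_diff[OF subspace_V g2(1) g(1)] by simp
    have "ip d d = ip d ((f' - g) - (f' - g2))" by (simp add: d_def)
    also have "\<dots> = ip d (f' - g) - ip d (f' - g2)"
      using V_good[OF dV] V_good[OF g(1)] V_good[OF g2(1)] gf' by (intro ip_diff2 good_diff) auto
    also have "\<dots> = 0" using g(2) g2(2) dV by simp
    finally have "d = 0" by (rule V_zero[OF dV])
    then show ?thesis by (simp add: d_def)
  qed
  have "P (Q i f)" unfolding Q_def orth_proj_def
    using theI[of P, OF Pg uniq] by (simp add: P_def)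
  then show ?thesis by (simp add: P_def)
qed



lemma fourier_integrand_meas:
  assumes "continuous_on UNIV \<eta>"
  shows "(\<lambda>x. exp (- \<i> * complex_of_real (k \<bullet> x)) * complex_of_real (\<eta> x)) \<in> borel_measurable borel"
  by (intro borel_measurable_continuous_onI continuous_intros assms)

lemma norm_fourier_integrand:
  "norm (exp (- \<i> * complex_of_real t) * complex_of_real y) = \<bar>y\<bar>"
proof -
  have "exp (- \<i> * complex_of_real t) = exp (\<i> * complex_of_real (- t))" by simp
  then show ?thesis by (simp add: norm_mult)
qed

lemma fourier3_cont:
  assumes ec: "continuous_on UNIV \<eta>" and ei: "integrable lborel \<eta>"
  shows "continuous_on UNIV (fourier3 \<eta>)"
proof -
  have em[measurable]: "\<eta> \<in> borel_measurable borel" using borel_measurable_continuous_onI[OF ec] .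
  have "isCont (\<lambda>k. \<integral> x. exp (- \<i> * complex_of_real (k \<bullet> x)) * complex_of_real (\<eta> x) \<partial>lborel) k0" for k0
  proof (rule continuous_at_sequentiallyI)
    fix u :: "nat \<Rightarrow> R3" assume u: "u \<longlonglongrightarrow> k0"
    show "(\<lambda>n. \<integral> x. exp (- \<i> * complex_of_real (u n \<bullet> x)) * complex_of_real (\<eta> x) \<partial>lborel) \<longlonglongrightarrow>
          (\<integral> x. exp (- \<i> * complex_of_real (k0 \<bullet> x)) * complex_of_real (\<eta> x) \<partial>lborel)"
    proof (rule integral_dominated_convergence[where w="\<lambda>x. \<bar>\<eta> x\<bar>"])
      show "integrable lborel (\<lambda>x. \<bar>\<eta> x\<bar>)" using ei by (rule integrable_abs)
      show "AE x in lborel. (\<lambda>n. exp (- \<i> * complex_of_real (u n \<bullet> x)) * complex_of_real (\<eta> x)) \<longlonglongrightarrow>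
             exp (- \<i> * complex_of_real (k0 \<bullet> x)) * complex_of_real (\<eta> x)"
        using u by (intro AE_I2 tendsto_intros)
      show "\<And>n. AE x in lborel. norm (exp (- \<i> * complex_of_real (u n \<bullet> x)) * complex_of_real (\<eta> x)) \<le> \<bar>\<eta> x\<bar>"
        by (intro AE_I2) (simp only: norm_fourier_integrand)
    qed (auto intro: fourier_integrand_meas[OF ec])
  qed
  then show ?thesis unfolding fourier3_def[abs_def]
    by (intro continuous_intros) (simp add: continuous_on_eq_continuous_at)
qed

lemma fourier3_bound:
  shows "cmod (fourier3 \<eta> k) \<le> (2 * pi) powr (-3/2) * (\<integral>x. \<bar>\<eta> x\<bar> \<partial>lborel)"
proof -
  have "cmod (fourier3 \<eta> k) = (2 * pi) powr (-3/2) *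
      cmod (\<integral> x. exp (- \<i> * complex_of_real (k \<bullet> x)) * complex_of_real (\<eta> x) \<partial>lborel)"
    by (simp add: fourier3_def norm_mult)
  also have "\<dots> \<le> (2 * pi) powr (-3/2) * (\<integral>x. \<bar>\<eta> x\<bar> \<partial>lborel)"
    by (intro mult_left_mono order.trans[OF integral_norm_bound]) (auto simp only: norm_fourier_integrand powr_ge_zero)
  finally show ?thesis .
qed



lemma eps_antimono: "m \<le> n \<Longrightarrow> eps n \<le> eps m"
  unfolding eps_def by (intro powr_mono) auto

definition FR :: "real \<Rightarrow> (R3 \<Rightarrow> real) \<Rightarrow> real \<Rightarrow> R3 \<Rightarrow> complex" where
  "FR \<tau> \<eta> R = (\<lambda>k. complex_of_real (R powr (3/2)) *
            (complex_of_real (norm (R *\<^sub>R k) powr (-1/2))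
             * exp (\<i> * complex_of_real (norm (R *\<^sub>R k) * \<tau>))
             * fourier3 \<eta> (R *\<^sub>R k)))"

lemma Q_zero_out:
  assumes "f \<in> borel_measurable borel" "\<forall>k. eps (Suc j) \<le> norm k \<and> norm k \<le> eps j \<longrightarrow> cmod (f k) \<le> B"
    "\<not> (eps (Suc j) \<le> norm k \<and> norm k \<le> eps j)"
  shows "Q j f k = 0"
  using Q_props[OF assms(1,2)] V_vanish assms(3) by blast

lemma norm_u[simp]: "cmod (u s f k) = cmod (f k)"
  by (simp add: u_def norm_mult)

lemma meas_u[measurable]: "f \<in> borel_measurable borel \<Longrightarrow> u s f \<in> borel_measurable borel"
  unfolding u_def[abs_def] by measurable

lemma meas_ReF[measurable]: "f \<in> borel_measurable borel \<Longrightarrow> ReF f \<in> borel_measurable borel"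
  unfolding ReF_def[abs_def] by measurable

lemma meas_ImF[measurable]: "f \<in> borel_measurable borel \<Longrightarrow> ImF f \<in> borel_measurable borel"
  unfolding ImF_def[abs_def] by measurable

lemma norm_ReF: "cmod (ReF f k) \<le> cmod (f k)" unfolding ReF_def by (simp add: abs_Re_le_cmod)
lemma norm_ImF: "cmod (ImF f k) \<le> cmod (f k)" unfolding ImF_def by (simp add: abs_Im_le_cmod)

context
  fixes r \<tau> :: real and \<eta> :: "R3 \<Rightarrow> real"
  assumes r0: "r \<ge> 0" and tf: "test_function \<eta>"
    and ft: "\<forall>k. Im (fourier3 \<eta> k) = 0 \<and> Re (fourier3 \<eta> k) > 0" and tau0: "\<tau> > 0"
begin

lemma eta_cont: "continuous_on UNIV \<eta>"
  using tf unfolding test_function_def by (auto elim: smooth3.cases)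

lemma eta_int: "integrable lborel \<eta>"
proof -
  define K where "K = closure {x. \<eta> x \<noteq> 0}"
  have K: "compact K" using tf unfolding test_function_def K_def by auto
  have "integrable lborel (\<lambda>x. indicator K x *\<^sub>R \<eta> x)"
    by (rule borel_integrable_compact[OF K continuous_on_subset[OF eta_cont]]) auto
  moreover have "(\<lambda>x. indicator K x *\<^sub>R \<eta> x) = \<eta>"
  proof
    fix x show "indicator K x *\<^sub>R \<eta> x = \<eta> x"
      using closure_subset[of "{x. \<eta> x \<noteq> 0}"] by (cases "\<eta> x = 0") (auto simp: K_def indicator_def)
  qed
  ultimately show ?thesis by simp
qed

lemma four_cont: "continuous_on UNIV (fourier3 \<eta>)"
  by (rule fourier3_cont[OF eta_cont eta_int])

definition "M\<eta> = (2 * pi) powr (-3/2) * (\<integral>x. \<bar>\<eta> x\<bar> \<partial>lborel)"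

lemma four_bound: "cmod (fourier3 \<eta> k) \<le> M\<eta>"
  unfolding M\<eta>_def by (rule fourier3_bound)

lemma four_scaled_meas[measurable]: "(\<lambda>k. fourier3 \<eta> (R *\<^sub>R k)) \<in> borel_measurable borel"
  by (intro borel_measurable_continuous_onI continuous_on_compose2[OF four_cont] continuous_intros) auto

lemma FR_meas[measurable]: "FR \<tau> \<eta> R \<in> borel_measurable borel"
  unfolding FR_def by measurable

lemma FR_bound:
  assumes R: "R > 0" and k: "norm k \<ge> e" and e: "e > 0"
  shows "cmod (FR \<tau> \<eta> R k) \<le> R powr (3/2) * (R * e) powr (-1/2) * M\<eta>"
proof -
  have "cmod (FR \<tau> \<eta> R k) = R powr (3/2) * (R * norm k) powr (-1/2) * cmod (fourier3 \<eta> (R *\<^sub>R k))"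
    using R by (simp add: FR_def norm_mult)
  also have "\<dots> \<le> R powr (3/2) * (R * e) powr (-1/2) * M\<eta>"
    using R k e by (intro mult_mono four_bound powr_mono2' mult_left_mono) auto
  finally show ?thesis .
qed

lemma shell_bound:
  assumes R: "R > 0"
  shows "\<forall>k. eps (Suc j) \<le> norm k \<and> norm k \<le> eps j \<longrightarrow> cmod (ReF (u s (FR \<tau> \<eta> R)) k) \<le> R powr (3/2) * (R * eps (Suc j)) powr (-1/2) * M\<eta>"
    and "\<forall>k. eps (Suc j) \<le> norm k \<and> norm k \<le> eps j \<longrightarrow> cmod (ImF (u s (FR \<tau> \<eta> R)) k) \<le> R powr (3/2) * (R * eps (Suc j)) powr (-1/2) * M\<eta>"
  using FR_bound[OF R _ eps_pos] norm_ReF norm_ImF norm_u order.trans by metis+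

lemma T_on_U:
  assumes R: "R > 0" and i: "i = Suc n0" and k: "eps (Suc i) < norm k" "norm k < eps i"
  shows "T r (FR \<tau> \<eta> R) k = FR \<tau> \<eta> R k
     + complex_of_real (1 / bb i - 1) * u (- tau r i) (Q i (ReF (u (tau r i) (FR \<tau> \<eta> R)))) k
     + \<i> * (complex_of_real (bb i - 1) * u (- tau r i) (Q i (ImF (u (tau r i) (FR \<tau> \<eta> R)))) k)"
proof -
  let ?F = "FR \<tau> \<eta> R"
  have out: "\<not> (eps (Suc j) \<le> norm k \<and> norm k \<le> eps j)" if "j \<noteq> i" for j
  proof (cases "j < i")
    case True
    then have "eps (Suc j) \<ge> eps i" by (intro eps_antimono) auto
    then show ?thesis using k by auto
  next
    case False
    then have "j \<ge> Suc i" using that by auto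
    then have "eps j \<le> eps (Suc i)" by (intro eps_antimono) auto
    then show ?thesis using k by auto
  qed
  have zR: "Q (Suc n) (ReF (u (tau r (Suc n)) ?F)) k = 0" if "n \<noteq> n0" for n
    by (rule Q_zero_out[OF _ shell_bound(1)[OF R] out]) (use that i in auto)
  have zI: "Q (Suc n) (ImF (u (tau r (Suc n)) ?F)) k = 0" if "n \<noteq> n0" for n
    by (rule Q_zero_out[OF _ shell_bound(2)[OF R] out]) (use that i in auto)
  have s1: "(\<Sum>n. let i = Suc n in complex_of_real (1 / bb i - 1) *
              u (- tau r i) (Q i (ReF (u (tau r i) ?F))) k) =
        complex_of_real (1 / bb i - 1) * u (- tau r i) (Q i (ReF (u (tau r i) ?F))) k"
    by (subst suminf_finite[of "{n0}"]) (auto simp: Let_def u_def zR i)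
  have s2: "(\<Sum>n. let i = Suc n in complex_of_real (bb i - 1) *
              u (- tau r i) (Q i (ImF (u (tau r i) ?F))) k) =
        complex_of_real (bb i - 1) * u (- tau r i) (Q i (ImF (u (tau r i) ?F))) k"
    by (subst suminf_finite[of "{n0}"]) (auto simp: Let_def u_def zI i)
  show ?thesis unfolding T_def s1 s2 ..
qed

end



lemma Re_ofreal_exp: "Re (complex_of_real a * exp (\<i> * complex_of_real \<theta>)) = a * cos \<theta>"
  by (simp add: Re_exp)

lemma sphere_null: "sphere (c::R3) \<rho> \<in> null_sets lborel"
  using negligible_sphere[of c \<rho>]
  by (auto simp: null_sets_completion_iff negligible_iff_null_sets negligible_convex_frontier)

lemma good_ReF: "good f \<Longrightarrow> good (ReF f)"
  unfolding good_def
proof (elim conjE exE, intro conjI)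
  fix B assume "\<forall>k. cmod (f k) \<le> B"
  then show "\<exists>B. \<forall>k. cmod (ReF f k) \<le> B" using norm_ReF order.trans by blast
qed (auto simp: ReF_def)

lemma good_ImF: "good f \<Longrightarrow> good (ImF f)"
  unfolding good_def
proof (elim conjE exE, intro conjI)
  fix B assume "\<forall>k. cmod (f k) \<le> B"
  then show "\<exists>B. \<forall>k. cmod (ImF f k) \<le> B" using norm_ImF order.trans by blast
qed (auto simp: ImF_def)

lemma Sh_meas[measurable]: "Sh i \<in> sets borel"
  using Sh_closed by (rule borel_closed)

lemma A_bound:
  assumes i: "i \<ge> 1" and int: "integrable lborel (\<lambda>k::R3. (zeta0 i (norm k))\<^sup>2)"
  shows "(\<integral>k. (zeta0 i (norm (k::R3)))\<^sup>2 \<partial>lborel) \<le> ((ln (2::real)) powr (-1/2))\<^sup>2 * 8 * (4/3 * pi)"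
proof -
  define \<epsilon> where "\<epsilon> = eps i"
  have e0: "\<epsilon> > 0" using eps_pos by (simp add: \<epsilon>_def)
  define K where "K = ((ln (2::real)) powr (-1/2))\<^sup>2 * eps (Suc i) powr (-3)"
  have pw: "(zeta0 i (norm k))\<^sup>2 \<le> K * indicator (cball (0::R3) \<epsilon>) k" for k
  proof (cases "eps (Suc i) \<le> norm k \<and> norm k \<le> eps i")
    case True
    have "(zeta0 i (norm k))\<^sup>2 \<le> ((ln (2::real)) powr (-1/2) * eps (Suc i) powr (-3/2))\<^sup>2"
      by (intro power_mono zeta0_bound zeta0_nonneg)
    also have "\<dots> = K" unfolding K_def power_mult_distrib
      by (simp add: power2_eq_square powr_add[symmetric])
    finally show ?thesis using True by (simp add: \<epsilon>_def indicator_def)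
  next
    case False
    have "K \<ge> 0" unfolding K_def by simp
    then show ?thesis using False by (simp add: zeta0_out)
  qed
  have "(\<integral>k. (zeta0 i (norm (k::R3)))\<^sup>2 \<partial>lborel) \<le> (\<integral>k. K * indicator (cball (0::R3) \<epsilon>) k \<partial>lborel)"
  proof (rule Bochner_Integration.integral_mono[OF int _ pw])
    show "integrable lborel (\<lambda>k. K * indicator (cball (0::R3) \<epsilon>) k)"
      by (intro integrable_mult_right integrable_real_indicator) (use emeasure_lborel_cball_finite[of "0::R3" \<epsilon>] in auto)
  qed
  also have "\<dots> = K * measure lborel (cball (0::R3) \<epsilon>)" by simp
  also have "measure lborel (cball (0::R3) \<epsilon>) = 4/3 * pi * \<epsilon> ^ 3"
    using e0 by (simp add: content_cball unit_ball_vol_3)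
  also have "K * (4/3 * pi * \<epsilon> ^ 3) = ((ln (2::real)) powr (-1/2))\<^sup>2 * 8 * (4/3 * pi)"
  proof -
    have "eps (Suc i) powr (-3) * \<epsilon> ^ 3 = 8"
      using e0 by (simp add: eps_Suc \<epsilon>_def[symmetric] powr_minus divide_simps powr_realpow)
    then show ?thesis unfolding K_def by (simp add: algebra_simps)
  qed
  finally show ?thesis .
qed

context
  fixes r \<tau> :: real and \<eta> :: "R3 \<Rightarrow> real"
  assumes r0: "r \<ge> 0" and tf: "test_function \<eta>"
    and ft: "\<forall>k. Im (fourier3 \<eta> k) = 0 \<and> Re (fourier3 \<eta> k) > 0" and tau0: "\<tau> > 0"
begin

lemmas four_cont' = four_cont[OF r0 tf ft tau0]

definition "Lc = (ln (2::real)) powr (-1/2)"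
definition "lam = 1 / (2 * \<tau>)"
definition "Ann = {s::R3. lam / 2 \<le> norm s \<and> norm s \<le> lam}"
definition "smin = (SOME x. x \<in> Ann \<and> (\<forall>y\<in>Ann. Re (fourier3 \<eta> x) \<le> Re (fourier3 \<eta> y)))"
definition "mm = Re (fourier3 \<eta> smin)"
definition "\<kappa> = Lc * lam * cos (3/2) * mm"

lemma lam_pos: "lam > 0" using tau0 by (simp add: lam_def)
lemma Lc_pos: "Lc > 0" by (simp add: Lc_def)

lemma smin_props: "smin \<in> Ann \<and> (\<forall>y\<in>Ann. Re (fourier3 \<eta> smin) \<le> Re (fourier3 \<eta> y))"
proof -
  have "compact Ann" unfolding Ann_def compact_eq_bounded_closed
  proof
    show "bounded {s::R3. lam / 2 \<le> norm s \<and> norm s \<le> lam}"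
      by (rule bounded_subset[OF bounded_cball[of 0 lam]]) auto
    show "closed {s::R3. lam / 2 \<le> norm s \<and> norm s \<le> lam}"
      by (intro closed_Collect_conj closed_Collect_le continuous_intros)
  qed
  moreover have "lam *\<^sub>R axis 1 1 \<in> Ann" using lam_pos by (simp add: Ann_def)
  then have "Ann \<noteq> {}" by auto
  moreover have "continuous_on Ann (\<lambda>s. Re (fourier3 \<eta> s))"
    by (intro continuous_intros continuous_on_subset[OF four_cont']) auto
  ultimately have "\<exists>x\<in>Ann. \<forall>y\<in>Ann. Re (fourier3 \<eta> x) \<le> Re (fourier3 \<eta> y)"
    by (rule continuous_attains_inf)
  then show ?thesis unfolding smin_def by (rule someI2_bex) auto
qed

lemma mm_pos: "mm > 0" using ft by (simp add: mm_def)
lemma mm_le: "s \<in> Ann \<Longrightarrow> mm \<le> Re (fourier3 \<eta> s)" using smin_props by (simp add: mm_def)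

lemma cos_pos: "cos (3/2::real) > 0"
  using pi_gt3 by (intro cos_gt_zero_pi) auto

lemma kappa_pos: "\<kappa> > 0"
  using Lc_pos lam_pos cos_pos mm_pos unfolding \<kappa>_def by (intro mult_pos_pos) auto

lemma pointwise:
  assumes i: "i \<ge> 1" and R: "R = lam / eps i" and k: "k \<in> Sh i"
  shows "zeta0 i (norm k) * Re (u (tau r i) (FR \<tau> \<eta> R) k) \<ge> \<kappa> * eps i powr (-3)"
proof -
  define \<epsilon> where "\<epsilon> = eps i"
  define \<rho> where "\<rho> = norm k"
  have e0: "\<epsilon> > 0" and e1: "\<epsilon> \<le> 1" using eps_pos eps_le1[OF i] by (auto simp: \<epsilon>_def)
  have rho: "\<epsilon> / 2 \<le> \<rho>" "\<rho> \<le> \<epsilon>" using k by (auto simp: Sh_def \<rho>_def \<epsilon>_def eps_Suc)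
  have rho0: "\<rho> > 0" using rho e0 by linarith
  have R0: "R > 0" using R lam_pos e0 by (simp add: \<epsilon>_def)
  define y where "y = Re (fourier3 \<eta> (R *\<^sub>R k))"
  have fy: "fourier3 \<eta> (R *\<^sub>R k) = complex_of_real y"
    using ft by (simp add: y_def complex_eq_iff)
  have nRk: "norm (R *\<^sub>R k) = R * \<rho>" using R0 by (simp add: \<rho>_def)
  have Re\<epsilon>: "R * \<epsilon> = lam" using R e0 by (simp add: \<epsilon>_def)
  define t where "t = tau r i"
  define \<theta> where "\<theta> = \<rho> * t + R * \<rho> * \<tau>"
  have uF: "u t (FR \<tau> \<eta> R) k = complex_of_real (R powr (3/2) * (R * \<rho>) powr (-1/2) * y) * exp (\<i> * complex_of_real \<theta>)"
    unfolding u_def FR_def fy nRk \<theta>_def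
    by (simp add: \<rho>_def algebra_simps exp_add[symmetric] distrib_left)
  have ReuF: "Re (u t (FR \<tau> \<eta> R) k) = R powr (3/2) * (R * \<rho>) powr (-1/2) * y * cos \<theta>"
    unfolding uF Re_ofreal_exp ..
  have t0: "t \<ge> 0" by (simp add: t_def tau_def)
  have "\<rho> * t \<le> \<epsilon> * t" using rho t0 by (intro mult_right_mono) auto
  also have "\<epsilon> * t = \<epsilon> powr r" using e0 by (simp add: t_def tau_def \<epsilon>_def powr_add[symmetric] powr_mult_base)
  also have "\<dots> \<le> 1" using e0 e1 r0 by (intro powr_le1) auto
  finally have th1: "\<rho> * t \<le> 1" .
  have "R * \<rho> * \<tau> \<le> R * \<epsilon> * \<tau>" using rho R0 tau0 by (intro mult_right_mono mult_left_mono) auto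
  also have "\<dots> = 1/2" using Re\<epsilon> tau0 by (simp add: lam_def)
  finally have th2: "R * \<rho> * \<tau> \<le> 1/2" .
  have th0: "\<theta> \<ge> 0" using t0 rho0 R0 tau0 by (simp add: \<theta>_def)
  have cos\<theta>: "cos \<theta> \<ge> cos (3/2)"
    using th0 th1 th2 pi_gt3 by (intro cos_monotone_0_pi_le) (auto simp: \<theta>_def)
  have Rk: "R *\<^sub>R k \<in> Ann"
  proof -
    have "R * (\<epsilon> / 2) \<le> R * \<rho>" "R * \<rho> \<le> R * \<epsilon>" using rho R0 by auto
    then show ?thesis using Re\<epsilon> nRk by (simp add: Ann_def)
  qed
  have ym: "y \<ge> mm" using mm_le[OF Rk] by (simp add: y_def)
  have z: "zeta0 i \<rho> = Lc * \<rho> powr (-3/2)"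
    using k by (simp add: Lc_def zeta0_in Sh_def \<rho>_def)
  have z1: "\<rho> powr (-3/2) \<ge> \<epsilon> powr (-3/2)" using rho rho0 by (intro powr_mono2') auto
  have "R * \<rho> \<le> R * \<epsilon>" using rho R0 by (intro mult_left_mono) auto
  then have z2: "(R * \<rho>) powr (-1/2) \<ge> lam powr (-1/2)"
    using rho0 R0 Re\<epsilon> by (intro powr_mono2') auto
  have z3: "R powr (3/2) = lam powr (3/2) * \<epsilon> powr (-3/2)"
    using R lam_pos e0 by (simp add: \<epsilon>_def powr_divide powr_minus_divide)
  have "(Lc * \<epsilon> powr (-3/2)) * (lam powr (3/2) * \<epsilon> powr (-3/2) * lam powr (-1/2) * mm * cos (3/2))
     \<le> (Lc * \<rho> powr (-3/2)) * (R powr (3/2) * (R * \<rho>) powr (-1/2) * y * cos \<theta>)"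
    unfolding z3 using Lc_pos z1 z2 ym cos\<theta> mm_pos cos_pos lam_pos
    by (intro mult_mono mult_nonneg_nonneg) (auto intro: order.trans[OF less_imp_le[OF mm_pos] ym]
        order.trans[OF less_imp_le[OF cos_pos] cos\<theta>])
  moreover have "(Lc * \<epsilon> powr (-3/2)) * (lam powr (3/2) * \<epsilon> powr (-3/2) * lam powr (-1/2) * mm * cos (3/2))
      = \<kappa> * \<epsilon> powr (-3)"
  proof -
    have a: "\<epsilon> powr (-3/2) * \<epsilon> powr (-3/2) = \<epsilon> powr (-3)" by (simp add: powr_add[symmetric])
    have b: "lam powr (3/2) * lam powr (-1/2) = lam" using lam_pos by (simp add: powr_add[symmetric])
    have "(Lc * \<epsilon> powr (-3/2)) * (lam powr (3/2) * \<epsilon> powr (-3/2) * lam powr (-1/2) * mm * cos (3/2))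
        = Lc * (\<epsilon> powr (-3/2) * \<epsilon> powr (-3/2)) * (lam powr (3/2) * lam powr (-1/2)) * mm * cos (3/2)"
      by (simp add: algebra_simps)
    also have "\<dots> = \<kappa> * \<epsilon> powr (-3)" unfolding a b \<kappa>_def by (simp add: algebra_simps)
    finally show ?thesis .
  qed
  ultimately show ?thesis using z ReuF by (simp add: \<rho>_def \<epsilon>_def t_def)
qed


lemma XR_bound:
  assumes i: "i \<ge> 1" and R: "R = lam / eps i"
    and int: "integrable lborel (\<lambda>k. zeta0 i (norm k) * Re (complex_of_real (indicator (Sh i) k) * u (tau r i) (FR \<tau> \<eta> R) k))"
  shows "(\<integral>k. zeta0 i (norm k) * Re (complex_of_real (indicator (Sh i) k) * u (tau r i) (FR \<tau> \<eta> R) k) \<partial>lborel) \<ge> \<kappa> * pi / 48"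
proof -
  define \<epsilon> where "\<epsilon> = eps i"
  have e0: "\<epsilon> > 0" using eps_pos by (simp add: \<epsilon>_def)
  define p :: R3 where "p = (3/4 * \<epsilon>) *\<^sub>R axis 1 1"
  define B where "B = ball p (\<epsilon> / 4)"
  have BSh: "k \<in> Sh i" if "k \<in> B" for k
  proof -
    have np: "norm p = 3/4 * \<epsilon>" using e0 by (simp add: p_def)
    have d: "norm (k - p) < \<epsilon> / 4" using that by (simp add: B_def dist_norm norm_minus_commute)
    have "norm k \<le> norm p + norm (k - p)" using norm_triangle_ineq[of p "k - p"] by simp
    moreover have "norm p \<le> norm k + norm (k - p)" using norm_triangle_ineq[of k "p - k"] by (simp add: norm_minus_commute)
    ultimately show ?thesis using np d by (simp add: Sh_def eps_Suc \<epsilon>_def[symmetric])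
  qed
  have pw: "\<kappa> * \<epsilon> powr (-3) * indicator B k \<le> zeta0 i (norm k) * Re (complex_of_real (indicator (Sh i) k) * u (tau r i) (FR \<tau> \<eta> R) k)" for k
  proof (cases "k \<in> Sh i")
    case True
    have "\<kappa> * \<epsilon> powr (-3) * indicator B k \<le> \<kappa> * \<epsilon> powr (-3)"
      using kappa_pos by (simp add: indicator_def)
    also have "\<dots> \<le> zeta0 i (norm k) * Re (u (tau r i) (FR \<tau> \<eta> R) k)"
      using pointwise[OF i R True] by (simp add: \<epsilon>_def)
    finally show ?thesis using True by simp
  next
    case False
    then have "k \<notin> B" using BSh by auto
    then show ?thesis using False by (simp add: zeta0_out Sh_def)
  qed
  have mono: "(\<integral>k. \<kappa> * \<epsilon> powr (-3) * indicator B k \<partial>lborel) \<le>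
      (\<integral>k. zeta0 i (norm k) * Re (complex_of_real (indicator (Sh i) k) * u (tau r i) (FR \<tau> \<eta> R) k) \<partial>lborel)"
  proof (rule integral_mono[OF _ int pw])
    show "integrable lborel (\<lambda>k. \<kappa> * \<epsilon> powr (-3) * indicator B k)"
      by (intro integrable_mult_right integrable_real_indicator) (use emeasure_lborel_ball_finite[of p "\<epsilon> / 4"] in \<open>auto simp: B_def\<close>)
  qed
  have measB: "measure lborel B = 4/3 * pi * (\<epsilon> / 4) ^ 3"
    using e0 by (simp add: B_def content_ball unit_ball_vol_3)
  have eq: "\<kappa> * \<epsilon> powr (-3) * (4/3 * pi * (\<epsilon> / 4) ^ 3) = \<kappa> * pi / 48"
  proof -
    have "\<epsilon> powr (-3) * \<epsilon> ^ 3 = 1" using e0 by (simp add: powr_minus divide_simps powr_realpow)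
    then show ?thesis by (simp add: algebra_simps power_divide)
  qed
  have "\<kappa> * pi / 48 = \<kappa> * \<epsilon> powr (-3) * measure lborel B" unfolding measB by (rule eq[symmetric])
  also have "\<dots> = (\<integral>k. \<kappa> * \<epsilon> powr (-3) * indicator B k \<partial>lborel)" by simp
  also note mono
  finally show ?thesis .
qed


lemmas FR_meas' [measurable] = FR_meas[OF r0 tf ft tau0]
lemmas shell_bound' = shell_bound[OF r0 tf ft tau0]
lemmas T_on_U' = T_on_U[OF r0 tf ft tau0]
lemmas FR_bound' = FR_bound[OF r0 tf ft tau0]

definition "C0 = ((ln (2::real)) powr (-1/2))\<^sup>2 * 8 * (4/3 * pi)"

lemma C0_pos: "C0 > 0" by (simp add: C0_def)

lemma key:
  assumes i: "i = Suc n0" and R: "R = lam / eps i"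
  shows "ennreal ((real i * (\<kappa> * pi / 48))\<^sup>2 / C0) \<le> (\<integral>\<^sup>+k. ennreal ((cmod (T r (FR \<tau> \<eta> R) k))\<^sup>2) \<partial>lborel)"
proof -
  have i1: "i \<ge> 1" using i by simp
  have R0: "R > 0" using R lam_pos eps_pos[of i] by simp
  define t where "t = tau r i"
  define F where "F = FR \<tau> \<eta> R"
  define G where "G = u t F"
  define qR where "qR = Q i (ReF G)"
  define qI where "qI = Q i (ImF G)"
  have [measurable]: "G \<in> borel_measurable borel" unfolding G_def F_def by measurable
  have QR: "qR \<in> Vspace i \<and> (\<forall>h\<in>Vspace i. l2_inner h (\<lambda>k. ReF G k - qR k) = 0)"
    unfolding qR_def G_def F_def t_def by (rule Q_props[OF _ shell_bound'(1)[OF R0]]) measurable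
  have QI: "qI \<in> Vspace i \<and> (\<forall>h\<in>Vspace i. l2_inner h (\<lambda>k. ImF G k - qI k) = 0)"
    unfolding qI_def G_def F_def t_def by (rule Q_props[OF _ shell_bound'(2)[OF R0]]) measurable
  have gqR: "good qR" and gqI: "good qI" using QR QI V_good by auto
  define h where "h = (\<lambda>k::R3. complex_of_real (zeta0 i (norm k)))"
  have hV: "h \<in> Vspace i"
  proof -
    define c where "c = (\<lambda>q::nat\<times>nat\<times>nat. if q = (0,0,0) then (1::complex) else 0)"
    have "c \<in> Cset i" unfolding Cset_def harmonic_coeffs_def c_def by auto
    moreover have "vfun i c = h"
    proof
      fix k
      have "(0,0,0) \<in> Iset i" by (simp add: Iset_def)
      then show "vfun i c k = h k" unfolding c_def
        by (subst vfun_delta) (auto simp: h_def mono3_def)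
    qed
    ultimately show ?thesis unfolding Vspace_eq by blast
  qed
  have gh: "good h" using V_good[OF hV] .
  have hout: "h k = 0" if "k \<notin> Sh i" for k
    using that by (simp add: h_def Sh_def zeta0_out)
  define Gs where "Gs = (\<lambda>k. complex_of_real (indicator (Sh i) k) * G k)"
  have gGs: "good Gs"
    unfolding good_def
  proof (intro conjI)
    show "Gs \<in> borel_measurable borel" unfolding Gs_def by measurable
    show "\<exists>B. \<forall>k. cmod (Gs k) \<le> B"
    proof (intro exI allI)
      fix k
      show "cmod (Gs k) \<le> max 0 (R powr (3/2) * (R * eps (Suc i)) powr (-1/2) * M\<eta> \<eta>)"
      proof (cases "k \<in> Sh i")
        case True
        then have "cmod (F k) \<le> R powr (3/2) * (R * eps (Suc i)) powr (-1/2) * M\<eta> \<eta>"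
          unfolding F_def by (intro FR_bound'[OF R0 _ eps_pos]) (auto simp: Sh_def)
        then show ?thesis using True by (simp add: Gs_def G_def)
      qed (simp add: Gs_def)
    qed
    show "\<forall>k. 2 < norm k \<longrightarrow> Gs k = 0"
      using eps_le2[of i] by (auto simp: Gs_def Sh_def indicator_def)
  qed
  define c1 where "c1 = complex_of_real (real i - 1)"
  define c2 where "c2 = \<i> * complex_of_real (1 / real i - 1)"
  define \<Phi> where "\<Phi> = (\<lambda>k. Gs k + c1 * qR k + c2 * qI k)"
  have \<Phi>eq: "\<Phi> = (Gs + (\<lambda>k. c1 * qR k)) + (\<lambda>k. c2 * qI k)" by (simp add: \<Phi>_def fun_eq_iff)
  have g\<Phi>: "good \<Phi>" unfolding \<Phi>eq by (intro good_add good_scale gGs gqR gqI)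
  have [measurable]: "\<Phi> \<in> borel_measurable borel" using g\<Phi> unfolding good_def by auto
  define U where "U = {k::R3. eps (Suc i) < norm k} \<inter> {k. norm k < eps i}"
  have Uo: "open U" unfolding U_def by (intro open_Int open_Collect_less continuous_intros)
  have [measurable]: "U \<in> sets borel" using Uo by (rule borel_open)
  have USh: "U \<subseteq> Sh i" by (auto simp: U_def Sh_def)
  define \<psi> where "\<psi> = (\<lambda>k. complex_of_real (indicator U k) * \<Phi> k)"
  have g\<psi>: "good \<psi>"
    unfolding good_def
  proof (intro conjI)
    show "\<psi> \<in> borel_measurable borel" unfolding \<psi>_def by measurable
    show "\<exists>B. \<forall>k. cmod (\<psi> k) \<le> B"
    proof -
      obtain B where "\<forall>k. cmod (\<Phi> k) \<le> B" using g\<Phi> unfolding good_def by blast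
      then show ?thesis by (intro exI[of _ "max 0 B"]) (auto simp: \<psi>_def indicator_def intro: le_max_iff_disj[THEN iffD2])
    qed
    show "\<forall>k. 2 < norm k \<longrightarrow> \<psi> k = 0" using g\<Phi> unfolding good_def \<psi>_def by auto
  qed
  have C1: "cmod (\<psi> k) \<le> cmod (T r F k)" for k
  proof (cases "k \<in> U")
    case False then show ?thesis by (simp add: \<psi>_def)
  next
    case True
    define E where "E = exp (\<i> * complex_of_real (norm k * t))"
    have E1: "cmod E = 1" by (simp add: E_def)
    have EE: "E * exp (\<i> * complex_of_real (norm k * - t)) = 1"
      unfolding E_def by (simp add: exp_minus)
    have TF: "T r F k = F k
     + complex_of_real (1 / bb i - 1) * u (- t) qR k
     + \<i> * (complex_of_real (bb i - 1) * u (- t) qI k)"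
      unfolding F_def qR_def qI_def G_def t_def F_def
      by (rule T_on_U'[OF R0 i]) (use True in \<open>auto simp: U_def\<close>)
    have bb: "1 / bb i - 1 = real i - 1" "bb i - 1 = 1 / real i - 1" by (auto simp: bb_def)
    have "E * T r F k = E * F k + c1 * ((E * exp (\<i> * complex_of_real (norm k * - t))) * qR k)
        + c2 * ((E * exp (\<i> * complex_of_real (norm k * - t))) * qI k)"
      unfolding TF bb c1_def c2_def u_def by (simp add: algebra_simps)
    also have "\<dots> = \<Phi> k"
    proof -
      have "indicator (Sh i) k = (1::real)" using True USh by auto
      then show ?thesis unfolding EE by (simp add: \<Phi>_def Gs_def G_def u_def E_def)
    qed
    finally have "E * T r F k = \<Phi> k" .
    then have "cmod (\<Phi> k) = cmod (T r F k)" using E1 by (metis mult_cancel_right1 norm_mult)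
    then show ?thesis using True by (simp add: \<psi>_def)
  qed
  have int\<psi>2: "integrable lborel (\<lambda>k. (cmod (\<psi> k))\<^sup>2)" by (rule good_sq_integrable[OF g\<psi>])
  have C2: "ennreal (\<integral>k. (cmod (\<psi> k))\<^sup>2 \<partial>lborel) \<le> (\<integral>\<^sup>+k. ennreal ((cmod (T r F k))\<^sup>2) \<partial>lborel)"
  proof -
    have "ennreal (\<integral>k. (cmod (\<psi> k))\<^sup>2 \<partial>lborel) = (\<integral>\<^sup>+k. ennreal ((cmod (\<psi> k))\<^sup>2) \<partial>lborel)"
      by (rule nn_integral_eq_integral[symmetric, OF int\<psi>2]) auto
    also have "\<dots> \<le> (\<integral>\<^sup>+k. ennreal ((cmod (T r F k))\<^sup>2) \<partial>lborel)"
      by (intro nn_integral_mono ennreal_leI power_mono C1) auto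
    finally show ?thesis .
  qed
  define XR where "XR = (\<integral>k. zeta0 i (norm k) * Re (Gs k) \<partial>lborel)"
  define XI where "XI = (\<integral>k. zeta0 i (norm k) * Im (Gs k) \<partial>lborel)"
  have XRc: "ip h (ReF Gs) = complex_of_real XR"
    unfolding l2_inner_def XR_def h_def ReF_def by (simp flip: of_real_mult)
  have XIc: "ip h (ImF Gs) = complex_of_real XI"
    unfolding l2_inner_def XI_def h_def ImF_def by (simp flip: of_real_mult)
  have gRe: "good (ReF Gs)" and gIm: "good (ImF Gs)" using gGs by (auto intro: good_ReF good_ImF)
  have oR: "ip h qR = ip h (ReF Gs)"
  proof -
    have "ip h (\<lambda>k. ReF G k - qR k) = 0" using QR hV by blast
    moreover have "ip h (\<lambda>k. ReF G k - qR k) = ip h (ReF Gs - qR)"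
      unfolding l2_inner_def
    proof (intro Bochner_Integration.integral_cong refl)
      fix k show "cnj (h k) * (ReF G k - qR k) = cnj (h k) * (ReF Gs - qR) k"
        using hout[of k] by (cases "k \<in> Sh i") (auto simp: Gs_def ReF_def)
    qed
    moreover have "ip h (ReF Gs - qR) = ip h (ReF Gs) - ip h qR" by (rule ip_diff2[OF gh gRe gqR])
    ultimately show ?thesis by simp
  qed
  have oI: "ip h qI = ip h (ImF Gs)"
  proof -
    have "ip h (\<lambda>k. ImF G k - qI k) = 0" using QI hV by blast
    moreover have "ip h (\<lambda>k. ImF G k - qI k) = ip h (ImF Gs - qI)"
      unfolding l2_inner_def
    proof (intro Bochner_Integration.integral_cong refl)
      fix k show "cnj (h k) * (ImF G k - qI k) = cnj (h k) * (ImF Gs - qI) k"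
        using hout[of k] by (cases "k \<in> Sh i") (auto simp: Gs_def ImF_def)
    qed
    moreover have "ip h (ImF Gs - qI) = ip h (ImF Gs) - ip h qI" by (rule ip_diff2[OF gh gIm gqI])
    ultimately show ?thesis by simp
  qed
  have Gsplit: "Gs = ReF Gs + (\<lambda>k. \<i> * ImF Gs k)"
    by (simp add: fun_eq_iff ReF_def ImF_def complex_eq_iff)
  have ipGs: "ip h Gs = ip h (ReF Gs) + \<i> * ip h (ImF Gs)"
    by (subst Gsplit) (simp add: ip_add2[OF gh gRe good_scale[OF gIm]] ip_scale2)
  define X where "X = ip h \<Phi>"
  have Xeq: "X = ip h Gs + c1 * ip h qR + c2 * ip h qI"
    unfolding X_def \<Phi>eq
    by (simp add: ip_add2 gh gGs gqR gqI good_add good_scale ip_scale2)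
  have ReX: "Re X = real i * XR"
    unfolding Xeq ipGs oR oI XRc XIc c1_def c2_def by (simp add: algebra_simps)
  have C4: "(\<integral>k. cnj (h k) * \<psi> k \<partial>lborel) = X"
  proof -
    have ae: "AE k in lborel. (k::R3) \<notin> sphere 0 (eps i) \<and> k \<notin> sphere 0 (eps (Suc i))"
      using AE_not_in[OF sphere_null[of 0 "eps i"]] AE_not_in[OF sphere_null[of 0 "eps (Suc i)"]]
      by eventually_elim auto
    have "(\<integral>k. cnj (h k) * \<psi> k \<partial>lborel) = (\<integral>k. cnj (h k) * \<Phi> k \<partial>lborel)"
    proof (rule integral_cong_AE)
      have [measurable]: "h \<in> borel_measurable borel" "\<psi> \<in> borel_measurable borel"
        using gh g\<psi> unfolding good_def by auto
      show "(\<lambda>k. cnj (h k) * \<psi> k) \<in> borel_measurable lborel" by simp measurable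
      show "(\<lambda>k. cnj (h k) * \<Phi> k) \<in> borel_measurable lborel" by simp measurable
      show "AE k in lborel. cnj (h k) * \<psi> k = cnj (h k) * \<Phi> k"
        using ae
      proof eventually_elim
        case (elim k)
        show ?case
        proof (cases "k \<in> U")
          case True then show ?thesis by (simp add: \<psi>_def)
        next
          case False
          then have "k \<notin> Sh i" using elim by (auto simp: U_def Sh_def)
          then show ?thesis using hout by simp
        qed
      qed
    qed
    then show ?thesis by (simp add: X_def l2_inner_def)
  qed
  define Y where "Y = (\<integral>k. cmod (h k) * cmod (\<psi> k) \<partial>lborel)"
  have intY: "integrable lborel (\<lambda>k. cmod (h k) * cmod (\<psi> k))"
    using integrable_norm[OF good_integrable[OF gh g\<psi>]] by (simp add: norm_mult)
  have "cmod X \<le> Y"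
    unfolding C4[symmetric] Y_def
    using integral_norm_bound[of lborel "\<lambda>k. cnj (h k) * \<psi> k"] by (simp add: norm_mult)
  moreover have "Re X \<le> cmod X" by (rule complex_Re_le_cmod)
  moreover have "XR \<ge> \<kappa> * pi / 48"
  proof -
    have intXR: "integrable lborel (\<lambda>k. zeta0 i (norm k) * Re (Gs k))"
    proof -
      have "integrable lborel (\<lambda>k. Re (cnj (h k) * Gs k))" using good_integrable[OF gh gGs] by (rule integrable_Re)
      moreover have "(\<lambda>k. Re (cnj (h k) * Gs k)) = (\<lambda>k. zeta0 i (norm k) * Re (Gs k))"
        by (simp add: h_def fun_eq_iff)
      ultimately show ?thesis by simp
    qed
    show ?thesis unfolding XR_def using XR_bound[OF i1 R] intXR by (simp add: Gs_def G_def F_def t_def)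
  qed
  ultimately have Ylow: "Y \<ge> real i * (\<kappa> * pi / 48)"
    using ReX i1 by (smt (verit) mult_left_mono of_nat_0_le_iff)
  define A where "A = (\<integral>k. (cmod (h k))\<^sup>2 \<partial>lborel)"
  have intA: "integrable lborel (\<lambda>k. (cmod (h k))\<^sup>2)" by (rule good_sq_integrable[OF gh])
  have hA: "(\<lambda>k. (cmod (h k))\<^sup>2) = (\<lambda>k. (zeta0 i (norm k))\<^sup>2)" by (simp add: h_def fun_eq_iff)
  have A_le: "A \<le> C0" unfolding A_def hA C0_def
    by (rule A_bound[OF i1]) (use intA hA in simp)
  define Bq where "Bq = (\<integral>k. (cmod (\<psi> k))\<^sup>2 \<partial>lborel)"
  define a where "a = Y / C0"
  have Y0: "Y \<ge> 0" unfolding Y_def by simp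
  have a0: "a \<ge> 0" using Y0 C0_pos by (simp add: a_def)
  have pwq: "2 * a * (cmod (h k) * cmod (\<psi> k)) - a\<^sup>2 * (cmod (h k))\<^sup>2 \<le> (cmod (\<psi> k))\<^sup>2" for k
  proof -
    have "0 \<le> (cmod (\<psi> k) - a * cmod (h k))\<^sup>2" by simp
    then show ?thesis by (simp add: power2_eq_square algebra_simps)
  qed
  have "(\<integral>k. 2 * a * (cmod (h k) * cmod (\<psi> k)) - a\<^sup>2 * (cmod (h k))\<^sup>2 \<partial>lborel) \<le> Bq"
  proof -
    have intL: "integrable lborel (\<lambda>k. 2 * a * (cmod (h k) * cmod (\<psi> k)) - a\<^sup>2 * (cmod (h k))\<^sup>2)"
      by (intro Bochner_Integration.integrable_diff integrable_mult_right intY intA)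
    show ?thesis unfolding Bq_def by (rule Bochner_Integration.integral_mono[OF intL int\<psi>2 pwq])
  qed
  moreover have "(\<integral>k. 2 * a * (cmod (h k) * cmod (\<psi> k)) - a\<^sup>2 * (cmod (h k))\<^sup>2 \<partial>lborel) = 2 * a * Y - a\<^sup>2 * A"
    unfolding Y_def A_def by (simp add: integrable_mult_right intY intA)
  ultimately have "2 * a * Y - a\<^sup>2 * A \<le> Bq" by simp
  moreover have "a\<^sup>2 * A \<le> a\<^sup>2 * C0" using A_le by (intro mult_left_mono) auto
  moreover have "2 * a * Y - a\<^sup>2 * C0 = Y\<^sup>2 / C0" using C0_pos by (simp add: a_def power2_eq_square divide_simps)
  ultimately have "Y\<^sup>2 / C0 \<le> Bq" by linarith
  moreover have "(real i * (\<kappa> * pi / 48))\<^sup>2 / C0 \<le> Y\<^sup>2 / C0"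
    using Ylow kappa_pos C0_pos by (intro divide_right_mono power_mono) auto
  ultimately have "(real i * (\<kappa> * pi / 48))\<^sup>2 / C0 \<le> Bq" by linarith
  then have "ennreal ((real i * (\<kappa> * pi / 48))\<^sup>2 / C0) \<le> ennreal Bq" by (rule ennreal_leI)
  also have "\<dots> \<le> (\<integral>\<^sup>+k. ennreal ((cmod (T r F k))\<^sup>2) \<partial>lborel)" using C2 by (simp add: Bq_def)
  finally show ?thesis by (simp add: F_def)
qed


lemma l2_lower:
  assumes "ennreal b \<le> (\<integral>\<^sup>+k. ennreal ((cmod (f k))\<^sup>2) \<partial>lborel)" "b \<ge> 0"
  shows "ennreal (sqrt b) \<le> l2_norm f"
proof -
  define I where "I = (\<integral>\<^sup>+k. ennreal ((cmod (f k))\<^sup>2) \<partial>lborel)"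
  show ?thesis
  proof (cases "I = \<infinity>")
    case True then show ?thesis by (simp add: l2_norm_def I_def[symmetric] Let_def)
  next
    case False
    then have "I = ennreal (enn2real I)" by (simp add: ennreal_enn2real_if)
    then have "b \<le> enn2real I" using assms unfolding I_def[symmetric]
      by (metis enn2real_ennreal enn2real_mono False infinity_ennreal_def less_top)
    then have "sqrt b \<le> sqrt (enn2real I)" by simp
    then show ?thesis using False by (simp add: l2_norm_def I_def[symmetric] Let_def)
  qed
qed

lemma final:
  shows "\<exists>Rs :: nat \<Rightarrow> real. (\<forall>n. Rs n > 0) \<and> filterlim Rs at_top sequentially \<and>
     ((\<lambda>n. l2_norm (T r (\<lambda>k. complex_of_real ((Rs n) powr (3/2)) *
            (complex_of_real (norm (Rs n *\<^sub>R k) powr (-1/2))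
             * exp (\<i> * complex_of_real (norm (Rs n *\<^sub>R k) * \<tau>))
             * fourier3 \<eta> (Rs n *\<^sub>R k))))) \<longlongrightarrow> \<infinity>) sequentially"
proof (intro exI conjI allI)
  define Rs where "Rs = (\<lambda>n. lam / eps (Suc n))"
  show "Rs n > 0" for n using lam_pos eps_pos by (simp add: Rs_def)
  have Rs2: "Rs n = lam * 2 ^ n" for n
    by (simp add: Rs_def eps_def powr_minus powr_realpow divide_inverse)
  show "filterlim Rs at_top sequentially"
  proof (rule filterlim_at_top_mono)
    show "LIM n sequentially. lam * real n :> at_top"
      by (rule filterlim_tendsto_pos_mult_at_top[OF tendsto_const lam_pos filterlim_real_sequentially])
    show "\<forall>\<^sub>F n in sequentially. lam * real n \<le> Rs n"
    proof (intro always_eventually allI)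
      fix n
      have "real n \<le> 2 ^ n" using less_exp[of n] by (metis less_imp_le of_nat_less_iff of_nat_numeral of_nat_power)
      then show "lam * real n \<le> Rs n" unfolding Rs2 using lam_pos by simp
    qed
  qed
  define c' where "c' = (\<kappa> * pi / 48) / sqrt C0"
  have c'pos: "c' > 0" using kappa_pos C0_pos by (simp add: c'_def)
  define g where "g = (\<lambda>n. c' * real (Suc n))"
  have glim: "filterlim g at_top sequentially"
    unfolding g_def
    by (rule filterlim_tendsto_pos_mult_at_top[OF tendsto_const c'pos
          filterlim_compose[OF filterlim_real_sequentially filterlim_Suc]])
  have low: "ennreal (g n) \<le> l2_norm (T r (FR \<tau> \<eta> (Rs n)))" for n
  proof -
    have "ennreal ((real (Suc n) * (\<kappa> * pi / 48))\<^sup>2 / C0) \<le> (\<integral>\<^sup>+k. ennreal ((cmod (T r (FR \<tau> \<eta> (Rs n)) k))\<^sup>2) \<partial>lborel)"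
      by (rule key[of "Suc n" n]) (auto simp: Rs_def)
    from l2_lower[OF this] have "ennreal (sqrt ((real (Suc n) * (\<kappa> * pi / 48))\<^sup>2 / C0)) \<le> l2_norm (T r (FR \<tau> \<eta> (Rs n)))"
      using C0_pos by simp
    moreover have "sqrt ((real (Suc n) * (\<kappa> * pi / 48))\<^sup>2 / C0) = g n"
      using kappa_pos C0_pos by (simp add: g_def c'_def real_sqrt_divide)
    ultimately show ?thesis by simp
  qed
  have "((\<lambda>n. l2_norm (T r (FR \<tau> \<eta> (Rs n)))) \<longlongrightarrow> top) sequentially"
    unfolding tendsto_top_iff_ennreal
  proof (intro allI impI)
    fix l :: real assume "l \<ge> 0"
    have "eventually (\<lambda>n. ennreal l < ennreal (g n)) sequentially"
      using glim[unfolded ennreal_tendsto_top_eq_at_top[symmetric]] \<open>l \<ge> 0\<close>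
      unfolding tendsto_top_iff_ennreal by blast
    then show "eventually (\<lambda>n. ennreal l < l2_norm (T r (FR \<tau> \<eta> (Rs n)))) sequentially"
      by eventually_elim (use low in \<open>auto intro: order.strict_trans2\<close>)
  qed
  then show "((\<lambda>n. l2_norm (T r (\<lambda>k. complex_of_real ((Rs n) powr (3/2)) *
            (complex_of_real (norm (Rs n *\<^sub>R k) powr (-1/2))
             * exp (\<i> * complex_of_real (norm (Rs n *\<^sub>R k) * \<tau>))
             * fourier3 \<eta> (Rs n *\<^sub>R k))))) \<longlongrightarrow> \<infinity>) sequentially"
    by (simp add: FR_def)
qed

end


theorem mainTheorem5:
  fixes r \<tau> :: real and \<eta> :: "R3 \<Rightarrow> real"
  assumes "r \<ge> 0"
    and "test_function \<eta>"
    and "\<forall>x y. norm x = norm y \<longrightarrow> \<eta> x = \<eta> y"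
    and "\<forall>k. Im (fourier3 \<eta> k) = 0 \<and> Re (fourier3 \<eta> k) > 0"
    and "\<tau> > 0"
    and "closure {x. \<eta> x \<noteq> 0} \<subseteq> ball 0 \<tau>"
  shows "\<exists>Rs :: nat \<Rightarrow> real. (\<forall>n. Rs n > 0) \<and> filterlim Rs at_top sequentially \<and>
     ((\<lambda>n. l2_norm (T r (\<lambda>k. complex_of_real ((Rs n) powr (3/2)) *
            (complex_of_real (norm (Rs n *\<^sub>R k) powr (-1/2))
             * exp (\<i> * complex_of_real (norm (Rs n *\<^sub>R k) * \<tau>))
             * fourier3 \<eta> (Rs n *\<^sub>R k))))) \<longlongrightarrow> \<infinity>) sequentially"
  by (rule final[OF assms(1,2,4,5)])

end
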